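(* Let $\bm{a}=(\alpha_1,\dots,\alpha_m)$ be a basis vector of $\mathbb{F}_{q^m}$ over $\mathbb{F}_q$ and let $\varphi$ be an $\mathbb{F}_q$-linear automorphism of $\mathbb{F}_{q^m}$. Let $A$ be the $m\times m$ matrix over $\mathbb{F}_{q^m}$ whose $i$-th row is $\varphi(\alpha_i\bm{a})=(\varphi(\alpha_i\alpha_1),\dots,\varphi(\alpha_i\alpha_m))$. Then $\varphi$ is fully linear over $\mathbb{F}_{q^m}$ if and only if $A$ has rank $1$ over $\mathbb{F}_{q^m}$.
   Context: $q$ is a prime power (the paper takes $q$ a power of $2$). A basis vector of $\mathbb{F}_{q^m}$ over $\mathbb{F}_q$ is a vector in $\mathbb{F}_{q^m}^m$ whose components form an $\mathbb{F}_q$-basis of $\mathbb{F}_{q^m}$. An $\mathbb{F}_q$-linear automorphism of $\mathbb{F}_{q^m}$ is a bijective $\mathbb{F}_q$-linear map $\varphi:\mathbb{F}_{q^m}\to\mathbb{F}_{q^m}$, applied componentwise to vectors; for a set $\mathcal{V}\subseteq\mathbb{F}_{q^m}^n$, $\varphi(\mathcal{V})=\{\varphi(\bm{v}):\bm{v}\in\mathcal{V}\}$. For an $\mathbb{F}_{q^m}$-linear code $\mathcal{C}\subseteq\mathbb{F}_{q^m}^n$, $\varphi$ is called linear on $\mathcal{C}$ if $\varphi(\mathcal{C})$ is an $\mathbb{F}_{q^m}$-linear subspace of $\mathbb{F}_{q^m}^n$. $\varphi$ is called fully linear over $\mathbb{F}_{q^m}$ if it is linear on every $\mathbb{F}_{q^m}$-linear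 code $\mathcal{C}\subseteq\mathbb{F}_{q^m}^n$, for every length $n\ge1$. *)

theory Defs
  imports "Jordan_Normal_Form.DL_Rank"
begin

text \<open>The ambient finite field F_{q^m} is a finite field type 'a; F_q is a subfield K of it.\<close>

definition is_subfield :: "'a::field set \<Rightarrow> bool" where
  "is_subfield K \<longleftrightarrow> 0 \<in> K \<and> 1 \<in> K \<and>
     (\<forall>x\<in>K. \<forall>y\<in>K. x + y \<in> K \<and> x * y \<in> K) \<and>
     (\<forall>x\<in>K. - x \<in> K \<and> inverse x \<in> K)"

definition is_basis_vector :: "'a::field set \<Rightarrow> nat \<Rightarrow> (nat \<Rightarrow> 'a) \<Rightarrow> bool" where
  "is_basis_vector K m a \<longleftrightarrow>
     (\<forall>c. (\<forall>i<m. c i \<in> K) \<and> (\<Sum>i<m. c i * a i) = 0 \<longrightarrow> (\<forall>i<m. c i = 0)) \<and>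
     (\<forall>x. \<exists>c. (\<forall>i<m. c i \<in> K) \<and> x = (\<Sum>i<m. c i * a i))"

definition is_linear_automorphism :: "'a::field set \<Rightarrow> ('a \<Rightarrow> 'a) \<Rightarrow> bool" where
  "is_linear_automorphism K \<phi> \<longleftrightarrow> bij \<phi> \<and>
     (\<forall>x y. \<phi> (x + y) = \<phi> x + \<phi> y) \<and>
     (\<forall>c\<in>K. \<forall>x. \<phi> (c * x) = c * \<phi> x)"

definition is_linear_code :: "nat \<Rightarrow> 'a::field list set \<Rightarrow> bool" where
  "is_linear_code n C \<longleftrightarrow> C \<subseteq> {v. length v = n} \<and> replicate n 0 \<in> C \<and>
     (\<forall>u\<in>C. \<forall>v\<in>C. map2 (+) u v \<in> C) \<and>
     (\<forall>c. \<forall>v\<in>C. map (\<lambda>x. c * x) v \<in> C)"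

definition fully_linear :: "('a::field \<Rightarrow> 'a) \<Rightarrow> bool" where
  "fully_linear \<phi> \<longleftrightarrow>
     (\<forall>n\<ge>1. \<forall>C. is_linear_code n C \<longrightarrow> is_linear_code n (map \<phi> ` C))"

end

theory Submission
  imports Defs
begin

lemma smult_vec_eq_zero:
  fixes w :: "'a::field vec"
  assumes "w \<in> carrier_vec n" "w \<noteq> 0\<^sub>v n" "c \<cdot>\<^sub>v w = 0\<^sub>v n"
  shows "c = 0"
proof -
  obtain i where i: "i < n" "w $ i \<noteq> 0" using assms(1,2) by (metis eq_vecI carrier_vecD index_zero_vec)
  have "(c \<cdot>\<^sub>v w) $ i = 0" using assms(3) i by simp
  then show ?thesis using i assms(1) by simp
qed

lemma (in vec_space) singleton_indpt:
  assumes "w \<in> carrier_vec n" "w \<noteq> 0\<^sub>v n"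
  shows "lin_indpt {w}"
proof -
  have key: "a w = 0" if "lincomb a {w} = 0\<^sub>v n" for a
  proof -
    have "lincomb a {w} = a w \<cdot>\<^sub>v w" unfolding lincomb_def using assms by simp
    then show ?thesis using that assms smult_vec_eq_zero by metis
  qed
  show ?thesis by (rule finite_lin_indpt2) (use assms key in auto)
qed

lemma (in vec_space) span_singleton_smult:
  assumes "w \<in> carrier_vec n" "v \<in> span {w}"
  shows "\<exists>c. v = c \<cdot>\<^sub>v w"
proof -
  obtain a where "a \<in> {w} \<rightarrow> carrier class_ring" "lincomb a {w} = v"
    using finite_in_span[of "{w}" v] assms by auto
  moreover have "lincomb a {w} = a w \<cdot>\<^sub>v w" unfolding lincomb_def using assms by simp
  ultimately show ?thesis by auto
qed

lemma (in vec_space) rank_ge_1: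
  assumes "A \<in> carrier_mat n nc" "j < nc" "col A j \<noteq> 0\<^sub>v n"
  shows "rank A \<ge> 1"
proof -
  have "col A j \<in> set (cols A)" using assms by (auto simp: cols_def)
  moreover have "col A j \<in> carrier_vec n" using assms by auto
  ultimately show ?thesis using rank_ge_card_indpt[OF assms(1), of "{col A j}"] singleton_indpt assms(3)
    by auto
qed

lemma (in vec_space) rank1_product:
  assumes A: "A \<in> carrier_mat n nc" and r: "rank A = 1"
  shows "\<exists>f g. \<forall>i<n. \<forall>j<nc. A $$ (i,j) = f i * g j"
proof (cases "\<exists>j<nc. col A j \<noteq> 0\<^sub>v n")
  case False
  have "A $$ (i,j) = 0 * 0" if "i<n" "j<nc" for i j
  proof -
    have "col A j = 0\<^sub>v n" using False that by auto
    then have "col A j $ i = 0" using that by simp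
    then show ?thesis using that A by simp
  qed
  then show ?thesis by (intro exI[of _ "\<lambda>_. 0"]) auto
next
  case True
  then obtain j0 where j0: "j0 < nc" "col A j0 \<noteq> 0\<^sub>v n" by auto
  define w where "w = col A j0"
  have wc: "w \<in> carrier_vec n" using A j0 w_def by auto
  have wcols: "w \<in> set (cols A)" using A j0 w_def by (auto simp: cols_def)
  have wi: "lin_indpt {w}" using singleton_indpt wc j0 w_def by auto
  obtain S where S: "maximal S (\<lambda>T. T \<subseteq> set (cols A) \<and> lin_indpt T)" "{w}\<subseteq>S" "finite S"
    using maximal_exists_superset[of "set (cols A)" "(\<lambda>T. T \<subseteq> set (cols A) \<and> lin_indpt T)" "{w}"]
      wi wcols by auto
  have "card S = 1" using rank_card_indpt[OF A S(1)] r by simp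
  then have Sw: "S = {w}" using S(2) by (metis card_1_singletonE insert_subset singletonD)
  have colspan: "\<exists>c. col A j = c \<cdot>\<^sub>v w" if j: "j < nc" for j
  proof (cases "col A j = w")
    case True
    then show ?thesis by (intro exI[of _ 1]) (use wc in simp)
  next
    case False
    have vc: "col A j \<in> carrier_vec n" using A j by auto
    have vcols: "col A j \<in> set (cols A)" using A j by (auto simp: cols_def)
    have "\<not> lin_indpt ({w} \<union> {col A j})"
    proof
      assume li: "lin_indpt ({w} \<union> {col A j})"
      have "{w} \<union> {col A j} \<subseteq> set (cols A)" using wcols vcols by auto
      moreover have "{w} \<union> {col A j} \<supseteq> S" using Sw by simp
      ultimately have "{w} \<union> {col A j} = S" using li S(1) unfolding maximal_def by simp
      then show False using Sw False by auto
    qed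
    then have "col A j \<in> span {w}" using lin_dep_iff_in_span[of "{w}" "col A j"] wc vc wi False by simp
    then show ?thesis using span_singleton_smult wc by auto
  qed
  then obtain c where c: "\<And>j. j < nc \<Longrightarrow> col A j = c j \<cdot>\<^sub>v w" by (metis (no_types))
  have "A $$ (i,j) = w $ i * c j" if "i<n" "j<nc" for i j
  proof -
    have "A $$ (i,j) = col A j $ i" using that A by simp
    also have "\<dots> = c j * w $ i" using c[OF that(2)] that wc by simp
    finally show ?thesis by simp
  qed
  then show ?thesis by (intro exI[of _ "\<lambda>i. w $ i"] exI[of _ c]) simp
qed

lemma aut_basic:
  assumes "is_linear_automorphism K \<phi>"
  shows "\<phi> 0 = 0" "inj \<phi>" "surj \<phi>" "\<And>x y. \<phi> (x + y) = \<phi> x + \<phi> y"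
    "\<And>c x. c \<in> K \<Longrightarrow> \<phi> (c * x) = c * \<phi> x"
proof -
  have add: "\<And>x y. \<phi> (x + y) = \<phi> x + \<phi> y" using assms unfolding is_linear_automorphism_def by blast
  have "\<phi> 0 + \<phi> 0 = \<phi> 0 + 0" using add[of 0 0] by simp
  then show "\<phi> 0 = 0" by (rule add_left_imp_eq)
  show "inj \<phi>" "surj \<phi>" using assms unfolding is_linear_automorphism_def bij_def by auto
  show "\<And>x y. \<phi> (x + y) = \<phi> x + \<phi> y" by (rule add)
  show "\<And>c x. c \<in> K \<Longrightarrow> \<phi> (c * x) = c * \<phi> x" using assms unfolding is_linear_automorphism_def by blast
qed

lemma phi_sum:
  assumes "\<phi> 0 = 0" "\<And>x y. \<phi> (x + y) = \<phi> x + \<phi> y" "finite I"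
  shows "\<phi> (\<Sum>i\<in>I. h i) = (\<Sum>i\<in>I. \<phi> (h i))"
  using assms(3) by (induction I rule: finite_induct) (auto simp: assms(1,2))

lemma fully_linear_iff:
  fixes \<phi> :: "'a::field \<Rightarrow> 'a"
  assumes "\<phi> 0 = 0" "inj \<phi>" "surj \<phi>" "\<And>x y. \<phi> (x + y) = \<phi> x + \<phi> y"
  shows "fully_linear \<phi> \<longleftrightarrow> (\<forall>x y. \<phi> (x * y) * \<phi> 1 = \<phi> x * \<phi> y)"
proof
  have l0: "\<phi> 1 \<noteq> 0" using assms(1,2) by (metis injD one_neq_zero)
  assume fl: "fully_linear \<phi>"
  show "\<forall>x y. \<phi> (x * y) * \<phi> 1 = \<phi> x * \<phi> y"
  proof (intro allI)
    fix x y :: 'a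
    define C where "C = {[z, y * z] | z. True}"
    have "is_linear_code 2 C" unfolding is_linear_code_def C_def
    proof (intro conjI ballI allI)
      show "replicate 2 0 \<in> {[z, y * z] |z. True}" by (auto simp: numeral_2_eq_2 intro: exI[of _ 0])
    next
      fix u v assume "u \<in> {[z, y * z] |z. True}" "v \<in> {[z, y * z] |z. True}"
      then obtain z1 z2 where "u = [z1, y*z1]" "v = [z2, y * z2]" by auto
      then show "map2 (+) u v \<in> {[z, y * z] |z. True}"
        by (auto simp: distrib_left intro: exI[of _ "z1+z2"])
    next
      fix c v assume "v \<in> {[z, y * z] |z. True}"
      then obtain z1 where "v = [z1, y*z1]" by auto
      then show "map ((*) c) v \<in> {[z, y * z] |z. True}"
        by (auto simp: algebra_simps intro: exI[of _ "c*z1"])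
    qed auto
    then have lc: "is_linear_code 2 (map \<phi> ` C)" using fl unfolding fully_linear_def by auto
    have "[1, y*1] \<in> C" unfolding C_def by blast
    then have "map \<phi> [1, y*1] \<in> map \<phi> ` C" by blast
    then have "map ((*) (\<phi> x / \<phi> 1)) (map \<phi> [1, y*1]) \<in> map \<phi> ` C"
      using lc unfolding is_linear_code_def by blast
    then obtain z where "map ((*) (\<phi> x / \<phi> 1)) (map \<phi> [1, y*1]) = map \<phi> [z, y * z]"
      unfolding C_def by auto
    then have e1: "\<phi> x = \<phi> z" and e2: "\<phi> x / \<phi> 1 * \<phi> y = \<phi> (y * z)" using l0 by auto
    from e1 have "x = z" using assms(2) by (simp add: injD)
    then show "\<phi> (x * y) * \<phi> 1 = \<phi> x * \<phi> y" using e2 l0 by (simp add: field_simps)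
  qed
next
  have l0: "\<phi> 1 \<noteq> 0" using assms(1,2) by (metis injD one_neq_zero)
  assume P: "\<forall>x y. \<phi> (x * y) * \<phi> 1 = \<phi> x * \<phi> y"
  have mul: "\<phi> (d * x) = \<phi> d / \<phi> 1 * \<phi> x" for d x using P l0 by (simp add: field_simps)
  show "fully_linear \<phi>" unfolding fully_linear_def
  proof (intro allI impI)
    fix n :: nat and C :: "'a list set" assume "1 \<le> n" and lc: "is_linear_code n C"
    show "is_linear_code n (map \<phi> ` C)" unfolding is_linear_code_def
    proof (intro conjI ballI allI)
      show "map \<phi> ` C \<subseteq> {v. length v = n}" using lc unfolding is_linear_code_def by auto
      have "map \<phi> (replicate n 0) = replicate n 0" by (simp add: assms(1))
      then show "replicate n 0 \<in> map \<phi> ` C" using lc unfolding is_linear_code_def by (metis image_eqI)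
    next
      fix u v assume "u \<in> map \<phi> ` C" "v \<in> map \<phi> ` C"
      then obtain u' v' where uv: "u' \<in> C" "v' \<in> C" "u = map \<phi> u'" "v = map \<phi> v'" by auto
      have "map2 (+) u v = map \<phi> (map2 (+) u' v')"
        unfolding uv by (simp add: zip_map1 zip_map2 assms(4) case_prod_beta)
      moreover have "map2 (+) u' v' \<in> C" using lc uv unfolding is_linear_code_def by blast
      ultimately show "map2 (+) u v \<in> map \<phi> ` C" by blast
    next
      fix c v assume "v \<in> map \<phi> ` C"
      then obtain v' where v: "v' \<in> C" "v = map \<phi> v'" by auto
      obtain d where d: "\<phi> d = c * \<phi> 1" using assms(3) by (metis surjD)
      have "map ((*) c) v = map \<phi> (map ((*) d) v')"
        unfolding v by (simp add: mul d l0)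
      moreover have "map ((*) d) v' \<in> C" using lc v unfolding is_linear_code_def by blast
      ultimately show "map ((*) c) v \<in> map \<phi> ` C" by blast
    qed
  qed
qed

theorem mainTheorem2:
  fixes K :: "'a::{field, finite} set" and m :: nat and a :: "nat \<Rightarrow> 'a" and \<phi> :: "'a \<Rightarrow> 'a"
  assumes "is_subfield K"
    and "is_basis_vector K m a"
    and "is_linear_automorphism K \<phi>"
  shows "fully_linear \<phi> \<longleftrightarrow>
    vec_space.rank m (mat m m (\<lambda>(i, j). \<phi> (a i * a j)) :: 'a mat) = 1"
proof -
  note ab = aut_basic[OF assms(3)]
  define A where "A = (mat m m (\<lambda>(i, j). \<phi> (a i * a j)) :: 'a mat)"
  have Ac: "A \<in> carrier_mat m m" unfolding A_def by simp
  have Ae: "A $$ (i,j) = \<phi> (a i * a j)" if "i < m" "j < m" for i j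
    unfolding A_def using that by simp
  have l0: "\<phi> 1 \<noteq> 0" using ab(1,2) by (metis injD one_neq_zero)
  have K0: "0 \<in> K" and K1: "1 \<in> K" and Km: "\<And>x y. x \<in> K \<Longrightarrow> y \<in> K \<Longrightarrow> x * y \<in> K"
    using assms(1) unfolding is_subfield_def by auto
  have li: "\<And>c. (\<forall>i<m. c i \<in> K) \<Longrightarrow> (\<Sum>i<m. c i * a i) = 0 \<Longrightarrow> (\<forall>i<m. c i = 0)"
    and sp: "\<And>x. \<exists>c. (\<forall>i<m. c i \<in> K) \<and> x = (\<Sum>i<m. c i * a i)"
    using assms(2) unfolding is_basis_vector_def by blast+
  have m0: "m > 0"
  proof (rule ccontr)
    assume "\<not> m > 0"
    then have "m = 0" by simp
    then show False using sp[of 1] by simp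
  qed
  have a0: "a 0 \<noteq> 0"
  proof
    assume "a 0 = 0"
    let ?c = "\<lambda>i. if i = 0 then (1::'a) else 0"
    have s0: "(\<Sum>i<m. ?c i * a i) = 0" using \<open>a 0 = 0\<close> by (simp add: if_distrib cong: if_cong)
    have cK: "\<forall>i<m. ?c i \<in> K" using K0 K1 by auto
    have "\<forall>i<m. ?c i = 0" using li[OF cK s0] .
    then show False using m0 by (drule_tac spec[of _ 0]) simp
  qed
  have "(\<forall>x y. \<phi> (x * y) * \<phi> 1 = \<phi> x * \<phi> y) \<longleftrightarrow> vec_space.rank m A = 1"
  proof
    assume P: "\<forall>x y. \<phi> (x * y) * \<phi> 1 = \<phi> x * \<phi> y"
    have le: "vec_space.rank m A \<le> 1"
    proof (rule vec_space.rank_le_1_product_entries[OF Ac, of "\<lambda>i. \<phi> (a i)" "\<lambda>j. \<phi> (a j) / \<phi> 1"])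
      fix r c assume "r < dim_row A" "c < dim_col A"
      then have rc: "r < m" "c < m" using Ac by auto
      have e: "\<phi> (a r * a c) * \<phi> 1 = \<phi> (a r) * \<phi> (a c)" using P by blast
      have "A $$ (r, c) = \<phi> (a r * a c)" using Ae rc by blast
      also have "\<dots> = \<phi> (a r) * \<phi> (a c) / \<phi> 1" using e l0 by (simp add: eq_divide_eq)
      finally show "A $$ (r, c) = \<phi> (a r) * (\<phi> (a c) / \<phi> 1)" by simp
    qed
    have nz: "\<phi> (a 0 * a 0) \<noteq> 0" using a0 ab(1,2) by (metis injD no_zero_divisors)
    have "col A 0 $ 0 = \<phi> (a 0 * a 0)" using Ac Ae[of 0 0] m0 by simp
    then have "col A 0 $ 0 \<noteq> 0" using nz by simp
    then have "col A 0 \<noteq> 0\<^sub>v m" using m0 by auto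
    then have "vec_space.rank m A \<ge> 1" using vec_space.rank_ge_1[OF Ac m0] by auto
    with le show "vec_space.rank m A = 1" by simp
  next
    assume r: "vec_space.rank m A = 1"
    obtain f g where fg: "\<And>i j. i < m \<Longrightarrow> j < m \<Longrightarrow> A $$ (i,j) = f i * g j"
      using vec_space.rank1_product[OF Ac r] by blast
    define coef where "coef x = (SOME c. (\<forall>i<m. c i \<in> K) \<and> x = (\<Sum>i<m. c i * a i))" for x
    have coef: "(\<forall>i<m. coef x i \<in> K) \<and> x = (\<Sum>i<m. coef x i * a i)" for x
      unfolding coef_def using someI_ex[OF sp[of x]] by blast
    have coefK: "i < m \<Longrightarrow> coef x i \<in> K" for x i using coef by blast
    have coefE: "(\<Sum>i<m. coef x i * a i) = x" for x using coef[of x] by (elim conjE) (erule sym)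
    have phiA: "\<phi> (a i * a j) = f i * g j" if "i < m" "j < m" for i j
      using fg[OF that] Ae[OF that] by simp
    define U where "U x = (\<Sum>i<m. coef x i * f i)" for x
    define W where "W y = (\<Sum>j<m. coef y j * g j)" for y
    have prod: "\<phi> (x * y) = U x * W y" for x y
    proof -
      have "x * y = (\<Sum>i<m. coef x i * a i) * (\<Sum>j<m. coef y j * a j)" by (simp only: coefE)
      also have "\<dots> = (\<Sum>i<m. \<Sum>j<m. (coef x i * coef y j) * (a i * a j))"
        by (simp add: sum_product algebra_simps)
      finally have "\<phi> (x * y) = \<phi> (\<Sum>i<m. \<Sum>j<m. (coef x i * coef y j) * (a i * a j))" by simp
      also have "\<dots> = (\<Sum>i<m. \<Sum>j<m. (coef x i * coef y j) * \<phi> (a i * a j))"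
        using ab(1,4) ab(5)[OF Km[OF coefK coefK]] by (simp add: phi_sum)
      also have "\<dots> = (\<Sum>i<m. \<Sum>j<m. (coef x i * coef y j) * (f i * g j))"
        by (intro sum.cong refl) (simp add: phiA)
      also have "\<dots> = U x * W y" unfolding U_def W_def
        by (simp add: sum_product algebra_simps)
      finally show ?thesis .
    qed
    show "\<forall>x y. \<phi> (x * y) * \<phi> 1 = \<phi> x * \<phi> y"
    proof (intro allI)
      fix x y
      have "\<phi> (x * y) * \<phi> 1 = U x * W y * (U 1 * W 1)" using prod[of x y] prod[of 1 1] by simp
      also have "\<dots> = (U x * W 1) * (U 1 * W y)" by (simp add: algebra_simps)
      also have "\<dots> = \<phi> x * \<phi> y" using prod[of x 1] prod[of 1 y] by simp
      finally show "\<phi> (x * y) * \<phi> 1 = \<phi> x * \<phi> y" .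
    qed
  qed
  then show ?thesis using fully_linear_iff[OF ab(1-4)] unfolding A_def by simp
qed

end
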